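(* Let $\Theta=\Theta(t)$ be a solution of the Kuramoto model with coupling strength $\kappa>0$, and let $\mathcal{I}$ be a time interval on which $R(t):=R(\Theta(t))>0$, with $\phi(t)$ a smooth branch of the phase order parameter on $\mathcal{I}$. Define $$\Delta(t):=\frac1N\sum_{k=1}^N\sin^2(\theta_k(t)-\phi(t)),\qquad t\in\mathcal{I}.$$ Then $$\dot R(t)\ \ge\ \kappa\sqrt{\Delta(t)}\left(R(t)\sqrt{\Delta(t)}-\frac{D(\Omega)}{2\kappa}\right),\qquad t\in\mathcal{I}.$$
   Context: Kuramoto model: for $N\ge 2$, natural frequencies $\Omega=(\nu_1,\dots,\nu_N)\in\mathbb{R}^N$ and coupling strength $\kappa$, the phases $\Theta(t)=(\theta_1(t),\dots,\theta_N(t))\in\mathbb{R}^N$ satisfy $\dot\theta_i=\nu_i+\frac{\kappa}{N}\sum_{j=1}^N\sin(\theta_j-\theta_i)$, $1\le i\le N$. $D(\Omega):=\max_{i,j}|\nu_i-\nu_j|$. The order parameters $R(\Theta)\in[0,1]$ and $\phi(\Theta)$ (defined mod $2\pi$ when $R>0$) are given by $R(\Theta)e^{\mathrm{i}\phi(\Theta)}=\frac1N\sum_{j=1}^Ne^{\mathrm{i}\theta_j}$. *)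

theory Defs
  imports "HOL-Analysis.Analysis"
begin

text \<open>Phases are indexed by 0..N-1: a configuration is a function nat => real,
  of which only the values at indices below N matter.\<close>

definition kuramoto_solution ::
  "nat \<Rightarrow> (nat \<Rightarrow> real) \<Rightarrow> real \<Rightarrow> (real \<Rightarrow> nat \<Rightarrow> real) \<Rightarrow> bool" where
  "kuramoto_solution N \<nu> \<kappa> \<Theta> \<longleftrightarrow>
     (\<forall>i<N. \<forall>t. ((\<lambda>s. \<Theta> s i) has_real_derivative
        (\<nu> i + \<kappa> / real N * (\<Sum>j<N. sin (\<Theta> t j - \<Theta> t i)))) (at t))"

definition order_param :: "nat \<Rightarrow> (nat \<Rightarrow> real) \<Rightarrow> complex" where
  "order_param N \<theta> = (1 / of_nat N) * (\<Sum>j<N. cis (\<theta> j))"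

definition order_R :: "nat \<Rightarrow> (nat \<Rightarrow> real) \<Rightarrow> real" where
  "order_R N \<theta> = cmod (order_param N \<theta>)"

definition freq_diam :: "nat \<Rightarrow> (nat \<Rightarrow> real) \<Rightarrow> real" where
  "freq_diam N \<nu> = Max {\<bar>\<nu> i - \<nu> j\<bar> | i j. i < N \<and> j < N}"

end

theory Submission
  imports Defs
begin

lemma cs_ineq:
  fixes x :: "nat \<Rightarrow> real" and N :: nat
  assumes "N > 0"
  shows "(1 / real N) * (\<Sum>k<N. \<bar>x k\<bar>) \<le> sqrt ((1 / real N) * (\<Sum>k<N. (x k)\<^sup>2))"
proof -
  define a where "a = (1 / real N) * (\<Sum>k<N. \<bar>x k\<bar>)"
  have a0: "a \<ge> 0" unfolding a_def by (simp add: sum_nonneg)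
  have sa: "(\<Sum>k<N. \<bar>x k\<bar>) = real N * a" unfolding a_def using assms by simp
  have "0 \<le> (\<Sum>k<N. (\<bar>x k\<bar> - a)\<^sup>2)" by (simp add: sum_nonneg)
  also have "\<dots> = (\<Sum>k<N. (x k)\<^sup>2) - 2 * a * (\<Sum>k<N. \<bar>x k\<bar>) + real N * a\<^sup>2"
  proof -
    have "(\<bar>x k\<bar> - a)\<^sup>2 = (x k)\<^sup>2 - 2 * a * \<bar>x k\<bar> + a\<^sup>2" for k
      by (simp add: power2_eq_square algebra_simps)
    hence "(\<Sum>k<N. (\<bar>x k\<bar> - a)\<^sup>2) = (\<Sum>k<N. (x k)\<^sup>2 - 2 * a * \<bar>x k\<bar> + a\<^sup>2)" by simp
    also have "\<dots> = (\<Sum>k<N. (x k)\<^sup>2) - 2 * a * (\<Sum>k<N. \<bar>x k\<bar>) + real N * a\<^sup>2"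
      by (simp add: sum.distrib sum_subtractf sum_distrib_left)
    finally show ?thesis .
  qed
  finally have "real N * a\<^sup>2 \<le> (\<Sum>k<N. (x k)\<^sup>2)" using sa by (simp add: power2_eq_square mult_ac)
  hence "a\<^sup>2 \<le> (1 / real N) * (\<Sum>k<N. (x k)\<^sup>2)" using assms by (simp add: field_simps)
  hence "sqrt (a\<^sup>2) \<le> sqrt ((1 / real N) * (\<Sum>k<N. (x k)\<^sup>2))" using real_sqrt_le_mono by blast
  thus ?thesis using a0 unfolding a_def by simp
qed

theorem lemma2p1:
  fixes N :: nat and \<nu> :: "nat \<Rightarrow> real" and \<kappa> :: real
    and \<Theta> :: "real \<Rightarrow> nat \<Rightarrow> real" and I :: "real set" and \<phi> :: "real \<Rightarrow> real"
  assumes "N \<ge> 2" and "\<kappa> > 0"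
    and "kuramoto_solution N \<nu> \<kappa> \<Theta>"
    and "is_interval I"
    and "\<forall>t\<in>I. order_R N (\<Theta> t) > 0"
    and "continuous_on I \<phi>"
    and "\<forall>t\<in>I. order_param N (\<Theta> t) = complex_of_real (order_R N (\<Theta> t)) * cis (\<phi> t)"
    and "t \<in> I"
  shows "deriv (\<lambda>s. order_R N (\<Theta> s)) t \<ge>
     \<kappa> * sqrt ((1 / real N) * (\<Sum>k<N. (sin (\<Theta> t k - \<phi> t))\<^sup>2)) *
       (order_R N (\<Theta> t) * sqrt ((1 / real N) * (\<Sum>k<N. (sin (\<Theta> t k - \<phi> t))\<^sup>2))
        - freq_diam N \<nu> / (2 * \<kappa>))"
proof -
  have N0: "real N > 0" using assms(1) by simp
  define X where "X s = (1 / real N) * (\<Sum>j<N. cos (\<Theta> s j))" for s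
  define Y where "Y s = (1 / real N) * (\<Sum>j<N. sin (\<Theta> s j))" for s
  define R0 where "R0 = order_R N (\<Theta> t)"
  define th where "th = \<Theta> t"
  define c where "c = cos (\<phi> t)"
  define sn where "sn = sin (\<phi> t)"
  define d where "d j = \<nu> j + \<kappa> / real N * (\<Sum>k<N. sin (th k - th j))" for j
  define \<sigma> where "\<sigma> j = sin (th j - \<phi> t)" for j
  define \<Delta> where "\<Delta> = (1 / real N) * (\<Sum>k<N. (\<sigma> k)\<^sup>2)"
  have R0pos: "R0 > 0" using assms(5,8) unfolding R0_def by auto
  have Rs: "order_R N (\<Theta> s) = sqrt ((X s)\<^sup>2 + (Y s)\<^sup>2)" for s
    unfolding order_R_def order_param_def X_def Y_def norm_complex_def
    by simp
  have op: "order_param N th = complex_of_real R0 * cis (\<phi> t)"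
    using assms(7,8) unfolding R0_def th_def by auto
  have Xt: "X t = R0 * c"
    using arg_cong[OF op, of Re] unfolding order_param_def X_def c_def th_def
    by simp
  have Yt: "Y t = R0 * sn"
    using arg_cong[OF op, of Im] unfolding order_param_def Y_def sn_def th_def
    by simp
  have sumcos: "(\<Sum>j<N. cos (th j)) = real N * R0 * c"
    using Xt N0 unfolding X_def th_def by (simp add: field_simps)
  have sumsin: "(\<Sum>j<N. sin (th j)) = real N * R0 * sn"
    using Yt N0 unfolding Y_def th_def by (simp add: field_simps)
  have dTh: "((\<lambda>s. \<Theta> s j) has_real_derivative d j) (at t)" if "j < N" for j
    using assms(3) that unfolding kuramoto_solution_def d_def th_def by blast
  define X' where "X' = (1 / real N) * (\<Sum>j<N. - sin (th j) * d j)"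
  define Y' where "Y' = (1 / real N) * (\<Sum>j<N. cos (th j) * d j)"
  have dX: "(X has_real_derivative X') (at t)"
    unfolding X_def[abs_def] X'_def th_def
    by (intro derivative_eq_intros DERIV_sum) (auto intro: dTh)
  have dY: "(Y has_real_derivative Y') (at t)"
    unfolding Y_def[abs_def] Y'_def th_def
    by (intro derivative_eq_intros DERIV_sum) (auto intro: dTh)
  have XY0: "(X t)\<^sup>2 + (Y t)\<^sup>2 > 0" using R0pos Rs[of t] unfolding R0_def th_def by auto
  have sq: "sqrt ((X t)\<^sup>2 + (Y t)\<^sup>2) = R0" using Rs[of t] unfolding R0_def by simp
  have dR: "((\<lambda>s. order_R N (\<Theta> s)) has_real_derivative (X t * X' + Y t * Y') / R0) (at t)"
  proof -
    have "((\<lambda>s. sqrt ((X s)\<^sup>2 + (Y s)\<^sup>2)) has_real_derivative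
        inverse (sqrt ((X t)\<^sup>2 + (Y t)\<^sup>2)) / 2 * (2 * X t * X' + 2 * Y t * Y')) (at t)"
    proof -
      have inner: "((\<lambda>s. (X s)\<^sup>2 + (Y s)\<^sup>2) has_real_derivative (2 * X t * X' + 2 * Y t * Y')) (at t)"
        by (intro derivative_eq_intros) (auto intro: dX dY)
      show ?thesis using DERIV_chain2[OF DERIV_real_sqrt[OF XY0] inner] by simp
    qed
    thus ?thesis unfolding Rs sq by (rule DERIV_cong) (use R0pos in \<open>simp add: field_simps\<close>)
  qed
  have deq: "deriv (\<lambda>s. order_R N (\<Theta> s)) t = (X t * X' + Y t * Y') / R0"
    using DERIV_imp_deriv[OF dR] .
  have d2: "(X t * X' + Y t * Y') / R0 = - (1 / real N) * (\<Sum>j<N. d j * \<sigma> j)"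
  proof -
    have "(X t * X' + Y t * Y') / R0 = c * X' + sn * Y'"
      using R0pos unfolding Xt Yt by (simp add: field_simps)
    also have "\<dots> = (1 / real N) * (\<Sum>j<N. d j * (sn * cos (th j) - c * sin (th j)))"
      unfolding X'_def Y'_def by (simp add: sum_distrib_left algebra_simps sum.distrib[symmetric] sum_negf[symmetric])
    also have "\<dots> = - (1 / real N) * (\<Sum>j<N. d j * \<sigma> j)"
    proof -
      have "d j * (sn * cos (th j) - c * sin (th j)) = - (d j * \<sigma> j)" for j
        unfolding \<sigma>_def c_def sn_def by (simp add: sin_diff algebra_simps)
      hence "(\<Sum>j<N. d j * (sn * cos (th j) - c * sin (th j))) = - (\<Sum>j<N. d j * \<sigma> j)"
        by (simp add: sum_negf)
      thus ?thesis by simp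
    qed
    finally show ?thesis .
  qed
  have dj: "d j = \<nu> j - \<kappa> * R0 * \<sigma> j" for j
  proof -
    have "(\<Sum>k<N. sin (th k - th j)) = cos (th j) * (\<Sum>k<N. sin (th k)) - sin (th j) * (\<Sum>k<N. cos (th k))"
      by (simp add: sin_diff sum_distrib_left sum_subtractf algebra_simps)
    also have "\<dots> = - real N * R0 * \<sigma> j"
      unfolding sumsin sumcos \<sigma>_def c_def sn_def by (simp add: sin_diff algebra_simps)
    finally show ?thesis unfolding d_def using N0 by simp
  qed
  have sig0: "(\<Sum>j<N. \<sigma> j) = 0"
  proof -
    have "(\<Sum>j<N. \<sigma> j) = c * (\<Sum>k<N. sin (th k)) - sn * (\<Sum>k<N. cos (th k))"
      unfolding \<sigma>_def c_def sn_def by (simp add: sin_diff sum_distrib_left sum_subtractf algebra_simps)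
    thus ?thesis unfolding sumsin sumcos by simp
  qed
  have main: "deriv (\<lambda>s. order_R N (\<Theta> s)) t = \<kappa> * R0 * \<Delta> - (1 / real N) * (\<Sum>j<N. \<nu> j * \<sigma> j)"
    unfolding deq d2 dj \<Delta>_def
    by (simp add: algebra_simps sum_subtractf sum_distrib_left power2_eq_square sum_negf)
  define D where "D = freq_diam N \<nu>"
  define a where "a = Max (\<nu> ` {..<N})"
  define b where "b = Min (\<nu> ` {..<N})"
  have ne: "{..<N} \<noteq> {}" using assms(1) by (simp add: lessThan_empty_iff)
  obtain ia where ia: "ia < N" "\<nu> ia = a"
  proof -
    have "a \<in> \<nu> ` {..<N}" unfolding a_def using ne by (intro Max_in) auto
    thus ?thesis using that by auto
  qed
  obtain ib where ib: "ib < N" "\<nu> ib = b"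
  proof -
    have "b \<in> \<nu> ` {..<N}" unfolding b_def using ne by (intro Min_in) auto
    thus ?thesis using that by auto
  qed
  have fin: "finite {\<bar>\<nu> i - \<nu> j\<bar> | i j. i < N \<and> j < N}"
  proof -
    have "{\<bar>\<nu> i - \<nu> j\<bar> | i j. i < N \<and> j < N} \<subseteq> (\<lambda>(i,j). \<bar>\<nu> i - \<nu> j\<bar>) ` ({..<N} \<times> {..<N})"
      by auto
    thus ?thesis by (rule finite_subset) auto
  qed
  have abD: "a - b \<le> D"
  proof -
    have "\<bar>\<nu> ia - \<nu> ib\<bar> \<le> D" unfolding D_def freq_diam_def
      by (rule Max_ge[OF fin]) (use ia ib in blast)
    thus ?thesis using ia ib by simp
  qed
  have bnd: "\<bar>\<nu> j - (a + b) / 2\<bar> \<le> D / 2" if "j < N" for j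
  proof -
    have "\<nu> j \<le> a" unfolding a_def using that by (intro Max_ge) auto
    moreover have "b \<le> \<nu> j" unfolding b_def using that by (intro Min_le) auto
    ultimately show ?thesis using abD by (simp add: abs_le_iff field_simps)
  qed
  define m where "m = (a + b) / 2"
  have Tm: "(\<Sum>j<N. \<nu> j * \<sigma> j) = (\<Sum>j<N. (\<nu> j - m) * \<sigma> j)"
    using sig0 by (simp add: algebra_simps sum_subtractf sum_distrib_left[symmetric])
  have "(\<Sum>j<N. (\<nu> j - m) * \<sigma> j) \<le> (\<Sum>j<N. D / 2 * \<bar>\<sigma> j\<bar>)"
  proof (rule sum_mono)
    fix j assume "j \<in> {..<N}"
    hence "\<bar>\<nu> j - m\<bar> \<le> D / 2" using bnd unfolding m_def by simp
    hence "\<bar>\<nu> j - m\<bar> * \<bar>\<sigma> j\<bar> \<le> D / 2 * \<bar>\<sigma> j\<bar>" by (rule mult_right_mono) simp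
    moreover have "(\<nu> j - m) * \<sigma> j \<le> \<bar>\<nu> j - m\<bar> * \<bar>\<sigma> j\<bar>"
      by (metis abs_ge_self abs_mult)
    ultimately show "(\<nu> j - m) * \<sigma> j \<le> D / 2 * \<bar>\<sigma> j\<bar>" by linarith
  qed
  note hsum = this
  have T1: "(1 / real N) * (\<Sum>j<N. \<nu> j * \<sigma> j) \<le> D / 2 * ((1 / real N) * (\<Sum>j<N. \<bar>\<sigma> j\<bar>))"
  proof -
    note h = hsum
    have "(\<Sum>j<N. D / 2 * \<bar>\<sigma> j\<bar>) = D / 2 * (\<Sum>j<N. \<bar>\<sigma> j\<bar>)" by (simp add: sum_distrib_left)
    with h have "(1 / real N) * (\<Sum>j<N. (\<nu> j - m) * \<sigma> j) \<le> (1 / real N) * (D / 2 * (\<Sum>j<N. \<bar>\<sigma> j\<bar>))"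
      using N0 by (intro mult_left_mono) auto
    thus ?thesis unfolding Tm by (simp add: mult_ac)
  qed
  have D0: "D \<ge> 0" using bnd[OF ia(1)] by linarith
  have "D / 2 * ((1 / real N) * (\<Sum>j<N. \<bar>\<sigma> j\<bar>)) \<le> D / 2 * sqrt \<Delta>"
    unfolding \<Delta>_def using cs_ineq[of N \<sigma>] N0 D0 by (intro mult_left_mono) auto
  with T1 have T2: "(1 / real N) * (\<Sum>j<N. \<nu> j * \<sigma> j) \<le> D / 2 * sqrt \<Delta>" by linarith
  have Dl0: "\<Delta> \<ge> 0" unfolding \<Delta>_def by (simp add: sum_nonneg)
  have goal: "\<kappa> * sqrt \<Delta> * (R0 * sqrt \<Delta> - D / (2 * \<kappa>)) = \<kappa> * R0 * \<Delta> - D / 2 * sqrt \<Delta>"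
    using assms(2) Dl0 by (simp add: field_simps power2_eq_square[symmetric])
  show ?thesis
    using main T2 goal unfolding \<Delta>_def \<sigma>_def th_def R0_def D_def by linarith
qed
end
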